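(* Let $\varphi=\mathrm{Parity}(\{0,1\})$ be the co-Büchi objective. There exists an infinitely branching (countable) MDP $\mathcal M$ with a color function $\mathit{Col}:S\to\{0,1\}$ and an initial state $s$ such that (i) for every FR-strategy $\sigma$ we have $\mathcal P_{\mathcal M,s,\sigma}(\varphi)=0$, and (ii) there exists an HD-strategy $\sigma$ such that $\mathcal P_{\mathcal M,s,\sigma}(\varphi)=1$. Hence optimal (and even almost-surely winning) strategies and $\epsilon$-optimal strategies for co-Büchi require infinite memory (i.e., cannot in general be chosen FR).
   Context: An MDP is $\mathcal M=\langle S,S_\Box,S_\circ,\longrightarrow,P\rangle$ where $S$ is a countable set of states partitioned into player states $S_\Box$ and random states $S_\circ$, $\longrightarrow\subseteq S\times S$ is a transition relation in which every state has at least one successor, and $P$ assigns to each random state a probability distribution over its successors. $\mathcal M$ is finitely branching if every state has finitely many successors, otherwise infinitely branching. A play is an infinite sequence $s_0s_1\cdots$ with $s_i\longrightarrow s_{i+1}$ for all $i$. A strategy is a function $\sigma:S^*S_\Box\to\mathcal D(S)$ assigning to each partial play ending in a player state $s$ a probability distribution over successors of $s$. Strategies are implemented by probabilistic transducers $(\mathsf M,\mathsf m_0,\pi_u,\pi_s)$ with countable memory $\mathsf M$, initial mode $\mathsf m_0$, randomized memory update $\pi_u:\mathsf M\times S\to\mathcal D(\mathsf M)$ and randomized successor choice $\pi_s:\mathsf M\times S_\Box\to\mathcal D(S)$ (choosing only successors of the current state); the induced strategy is $\sigma(s_0\cdots s_n)=\pi_s(s_n,\pi_u(s_0\cdots s_{n-1},\mathsf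 m_0))$ with $\pi_u$ extended naturally. A strategy is finite-memory (F) if some transducer with finite $\mathsf M$ induces it, deterministic (D) if $\pi_u,\pi_s$ can be taken Dirac; FR = finite-memory randomized, HD = history-dependent deterministic. $\mathcal P_{\mathcal M,s,\sigma}$ is the induced probability measure on plays from $s$. For a color function $\mathit{Col}:S\to\mathcal C$ with $\mathcal C\subseteq\mathbb N$ finite, $\mathrm{Parity}(\mathcal C)$ is the set of plays in which the largest color occurring infinitely often is even; thus $\mathrm{Parity}(\{0,1\})$ (co-Büchi) is the set of plays visiting color-1 states only finitely often. The value of $s$ is $\sup_\sigma\mathcal P_{\mathcal M,s,\sigma}(\varphi)$; $\sigma$ is $\epsilon$-optimal if it achieves at least value minus $\epsilon$, optimal if $\epsilon=0$, almost-surely winning if it achieves probability $1$. *)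

theory Defs
  imports "HOL-Probability.Probability"
begin

text \<open>An MDP is given by the set of
player states (all other states are random states), the successor function (the transition
relation), and the probability distributions of random states.\<close>

record mdp =
  player :: "nat set"
  succ   :: "nat \<Rightarrow> nat set"
  prob_of :: "nat \<Rightarrow> nat pmf"

definition wf_mdp :: "mdp \<Rightarrow> bool" where
  "wf_mdp M \<longleftrightarrow> (\<forall>t. succ M t \<noteq> {}) \<and>
     (\<forall>t. t \<notin> player M \<longrightarrow> set_pmf (prob_of M t) \<subseteq> succ M t)"

definition infinitely_branching :: "mdp \<Rightarrow> bool" where
  "infinitely_branching M \<longleftrightarrow> (\<exists>t. infinite (succ M t))"

definition is_play :: "mdp \<Rightarrow> nat stream \<Rightarrow> bool" where
  "is_play M \<omega> \<longleftrightarrow> (\<forall>i. \<omega> !! Suc i \<in> succ M (\<omega> !! i))"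

text \<open>Strategies: a history (nonempty list s0...sn with sn a player state) is mapped to a
distribution over successors of sn.  Values on other lists are irrelevant.\<close>

definition is_strategy :: "mdp \<Rightarrow> (nat list \<Rightarrow> nat pmf) \<Rightarrow> bool" where
  "is_strategy M \<sigma> \<longleftrightarrow>
     (\<forall>h. h \<noteq> [] \<and> last h \<in> player M \<longrightarrow> set_pmf (\<sigma> h) \<subseteq> succ M (last h))"

text \<open>Probabilistic transducers with memory modes encoded in a countable set Mem of naturals.\<close>

definition wf_transducer :: "mdp \<Rightarrow> nat set \<Rightarrow> nat \<Rightarrow> (nat \<Rightarrow> nat \<Rightarrow> nat pmf)
    \<Rightarrow> (nat \<Rightarrow> nat \<Rightarrow> nat pmf) \<Rightarrow> bool" where
  "wf_transducer M Mem m0 upd sel \<longleftrightarrow> m0 \<in> Mem \<and>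
     (\<forall>m\<in>Mem. \<forall>t. set_pmf (upd m t) \<subseteq> Mem) \<and>
     (\<forall>m\<in>Mem. \<forall>t\<in>player M. set_pmf (sel m t) \<subseteq> succ M t)"

definition upd_ext :: "(nat \<Rightarrow> nat \<Rightarrow> nat pmf) \<Rightarrow> nat list \<Rightarrow> nat \<Rightarrow> nat pmf" where
  "upd_ext upd w m0 = foldl (\<lambda>d t. bind_pmf d (\<lambda>m. upd m t)) (return_pmf m0) w"

definition induces :: "mdp \<Rightarrow> nat \<Rightarrow> (nat \<Rightarrow> nat \<Rightarrow> nat pmf) \<Rightarrow> (nat \<Rightarrow> nat \<Rightarrow> nat pmf)
    \<Rightarrow> (nat list \<Rightarrow> nat pmf) \<Rightarrow> bool" where
  "induces M m0 upd sel \<sigma> \<longleftrightarrow>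
     (\<forall>h. h \<noteq> [] \<and> last h \<in> player M \<longrightarrow>
        \<sigma> h = bind_pmf (upd_ext upd (butlast h) m0) (\<lambda>m. sel m (last h)))"

definition FR_strategy :: "mdp \<Rightarrow> (nat list \<Rightarrow> nat pmf) \<Rightarrow> bool" where
  "FR_strategy M \<sigma> \<longleftrightarrow> is_strategy M \<sigma> \<and>
     (\<exists>Mem m0 upd sel. finite Mem \<and> wf_transducer M Mem m0 upd sel \<and> induces M m0 upd sel \<sigma>)"

definition HD_strategy :: "mdp \<Rightarrow> (nat list \<Rightarrow> nat pmf) \<Rightarrow> bool" where
  "HD_strategy M \<sigma> \<longleftrightarrow> is_strategy M \<sigma> \<and>
     (\<exists>Mem m0 upd sel. wf_transducer M Mem m0 upd sel \<and>
        (\<forall>m\<in>Mem. \<forall>t. \<exists>m'. upd m t = return_pmf m') \<and>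
        (\<forall>m\<in>Mem. \<forall>t\<in>player M. \<exists>t'. sel m t = return_pmf t') \<and>
        induces M m0 upd sel \<sigma>)"

definition step_prob :: "mdp \<Rightarrow> (nat list \<Rightarrow> nat pmf) \<Rightarrow> nat list \<Rightarrow> nat \<Rightarrow> real" where
  "step_prob M \<sigma> h u =
     (if last h \<in> player M then pmf (\<sigma> h) u else pmf (prob_of M (last h)) u)"

definition cyl_prob :: "mdp \<Rightarrow> nat \<Rightarrow> (nat list \<Rightarrow> nat pmf) \<Rightarrow> nat list \<Rightarrow> real" where
  "cyl_prob M s \<sigma> h =
     (if h = [] then 1
      else (if hd h = s then 1 else 0) *
           (\<Prod>i\<in>{0..<length h - 1}. step_prob M \<sigma> (take (Suc i) h) (h ! Suc i)))"

text \<open>\<mu> is the probability measure P_{M,s,\<sigma>} on infinite state sequences: a probability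
measure on the stream sigma-algebra agreeing with the strategy on all cylinders
(which determines it uniquely).\<close>

definition is_play_measure :: "mdp \<Rightarrow> nat \<Rightarrow> (nat list \<Rightarrow> nat pmf) \<Rightarrow> nat stream measure \<Rightarrow> bool" where
  "is_play_measure M s \<sigma> \<mu> \<longleftrightarrow>
     prob_space \<mu> \<and> sets \<mu> = sets (stream_space (count_space UNIV)) \<and>
     (\<forall>h. measure \<mu> {\<omega>. stake (length h) \<omega> = h} = cyl_prob M s \<sigma> h)"

text \<open>Parity objective for a color function with finite range: the largest color occurring
infinitely often is even.\<close>

definition Parity :: "mdp \<Rightarrow> (nat \<Rightarrow> nat) \<Rightarrow> nat stream set" where
  "Parity M Col = {\<omega>. is_play M \<omega> \<and>
     even (Max {c. \<exists>\<^sub>\<infinity>i. Col (\<omega> !! i) = c})}"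

end

theory Submission
  imports Defs
begin


definition D :: "nat pmf" where "D = geometric_pmf (1/2)"

definition sc :: "nat \<Rightarrow> nat set" where
  "sc t = (if t = 0 then {n. 3 \<le> n} else if t \<le> 2 then {0} else {1,2})"

definition pr :: "nat \<Rightarrow> nat pmf" where
  "pr t = (if t = 0 then return_pmf 3 else if t \<le> 2 then return_pmf 0
           else map_pmf (\<lambda>x. if t - 3 \<le> x then 2 else 1) D)"

definition MM :: mdp where "MM = \<lparr>player = {0}, succ = sc, prob_of = pr\<rparr>"

definition Col0 :: "nat \<Rightarrow> nat" where "Col0 t = (if t = 2 then 1 else 0)"

lemma MM_simps[simp]: "player MM = {0}" "succ MM = sc" "prob_of MM = pr"
  by (simp_all add: MM_def)

lemma pmf_D: "pmf D x = (1/2)^x * (1/2)"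
  unfolding D_def by (subst pmf_geometric) auto

lemma set_pmf_D: "set_pmf D = UNIV"
  unfolding D_def by (rule set_pmf_geometric) auto

lemma D_sum: "(\<Sum>x<n. pmf D x) = 1 - (1/2)^n"
  by (induction n) (auto simp: pmf_D)

lemma D_less: "measure_pmf.prob D {x. x < n} = 1 - (1/2)^n"
proof -
  have "{x. x < n} = {..<n}" by auto
  then show ?thesis by (simp add: measure_measure_pmf_finite D_sum)
qed

lemma D_ge: "measure_pmf.prob D {x. n \<le> x} = (1/2)^n"
proof -
  have "{x. n \<le> x} = UNIV - {x. x < n}" by auto
  moreover have "measure_pmf.prob D (UNIV - {x. x < n}) = 1 - measure_pmf.prob D {x. x < n}"
    using measure_pmf.prob_compl[of "{x. x < n}" D] by simp
  ultimately show ?thesis using D_less[of n] by simp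
qed

lemma pmf_pr2: "pmf (pr (n+3)) 2 = (1/2)^n"
proof -
  have "(\<lambda>x. if n \<le> x then 2 else (1::nat)) -` {2} = {x. n \<le> x}" by (auto split: if_splits)
  then show ?thesis by (simp add: pr_def pmf_map D_ge)
qed

lemma wf: "wf_mdp MM"
  unfolding wf_mdp_def by (auto simp: sc_def pr_def)

lemma inf_br: "infinitely_branching MM"
proof -
  have "\<forall>m. \<exists>n\<ge>m. (3::nat) \<le> n" by (metis le_add1 le_add2)
  then have "infinite {n::nat. 3 \<le> n}" by (simp add: infinite_nat_iff_unbounded_le)
  then show ?thesis unfolding infinitely_branching_def by (auto intro!: exI[of _ 0] simp: sc_def)
qed

lemma Parity_char: "Parity MM Col0 = {\<omega>. is_play MM \<omega> \<and> \<not> (\<exists>\<^sub>\<infinity>i. \<omega> !! i = 2)}"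
proof -
  { fix \<omega> :: "nat stream"
    let ?C = "{c. \<exists>\<^sub>\<infinity>i. Col0 (\<omega> !! i) = c}"
    have sub: "?C \<subseteq> {0,1}"
    proof
      fix c assume "c \<in> ?C"
      then obtain i where "Col0 (\<omega> !! i) = c" using INFM_EX by blast
      then show "c \<in> {0,1}" by (auto simp: Col0_def split: if_splits)
    qed
    have fin: "finite ?C" using sub finite_subset by blast
    have eq1: "\<And>i. Col0 (\<omega> !! i) = 1 \<longleftrightarrow> \<omega> !! i = 2" by (simp add: Col0_def)
    have eq0: "\<And>i. Col0 (\<omega> !! i) = 0 \<longleftrightarrow> \<omega> !! i \<noteq> 2" by (simp add: Col0_def)
    have "even (Max ?C) \<longleftrightarrow> \<not> (\<exists>\<^sub>\<infinity>i. \<omega> !! i = 2)"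
    proof cases
      assume a: "\<exists>\<^sub>\<infinity>i. \<omega> !! i = 2"
      then have "\<exists>\<^sub>\<infinity>i. Col0 (\<omega> !! i) = 1" by (rule INFM_mono) (simp add: Col0_def)
      then have "1 \<in> ?C" by simp
      then have "Max ?C = 1" using sub fin by (intro Max_eqI) auto
      then show ?thesis using a by simp
    next
      assume a: "\<not> (\<exists>\<^sub>\<infinity>i. \<omega> !! i = 2)"
      have "\<exists>\<^sub>\<infinity>i. \<omega> !! i \<noteq> 2" using a by (intro MOST_INFM) auto
      then have z: "0 \<in> ?C" by (simp add: eq0)
      have n1: "1 \<notin> ?C" using a by (auto simp: Col0_def elim: MOST_mono)
      have "?C \<subseteq> {0}"
      proof
        fix c assume c: "c \<in> ?C"
        with sub have c01: "c = 0 \<or> c = 1" by blast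
        show "c \<in> {0}"
        proof (cases "c = 0")
          case False
          then have "c = 1" using c01 by simp
          then have False using c n1 by (simp only:)
          then show ?thesis ..
        qed simp
      qed
      then have "?C = {0}" using z by blast
      then show ?thesis using a by simp
    qed }
  then show ?thesis unfolding Parity_def by auto
qed




lemma cyl_prob_nil[simp]: "cyl_prob M s \<sigma> [] = 1" by (simp add: cyl_prob_def)
lemma cyl_prob_single: "cyl_prob M s \<sigma> [a] = (if a = s then 1 else 0)" by (simp add: cyl_prob_def)

lemma cyl_prob_snoc:
  assumes "h \<noteq> []"
  shows "cyl_prob M s \<sigma> (h @ [a]) = cyl_prob M s \<sigma> h * step_prob M \<sigma> h a"
proof -
  obtain k where k: "length h = Suc k" using assms by (cases h) auto
  have "(\<Prod>i\<in>{0..<length (h@[a]) - 1}. step_prob M \<sigma> (take (Suc i) (h@[a])) ((h@[a]) ! Suc i))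
      = (\<Prod>i\<in>{0..<k}. step_prob M \<sigma> (take (Suc i) (h@[a])) ((h@[a]) ! Suc i)) *
          step_prob M \<sigma> (take (Suc k) (h@[a])) ((h@[a]) ! Suc k)"
    using k by (simp add: prod.atLeast0_lessThan_Suc)
  also have "(\<Prod>i\<in>{0..<k}. step_prob M \<sigma> (take (Suc i) (h@[a])) ((h@[a]) ! Suc i))
      = (\<Prod>i\<in>{0..<k}. step_prob M \<sigma> (take (Suc i) h) (h ! Suc i))"
    using k by (intro prod.cong) (auto simp: nth_append take_append)
  also have "take (Suc k) (h@[a]) = h" using k by simp
  also have "(h@[a]) ! Suc k = a" using k by (simp add: nth_append)
  finally show ?thesis using assms k by (simp add: cyl_prob_def)
qed

lemma step_nz:
  assumes "is_strategy MM \<sigma>" "step_prob MM \<sigma> h a \<noteq> 0" "h \<noteq> []"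
  shows "a \<in> sc (last h)"
proof cases
  assume p: "last h \<in> player MM"
  then have "pmf (\<sigma> h) a \<noteq> 0" using assms by (simp add: step_prob_def)
  then have "a \<in> set_pmf (\<sigma> h)" by (simp add: set_pmf_iff)
  with assms(1,3) p show ?thesis unfolding is_strategy_def by auto
next
  assume n: "last h \<notin> player MM"
  then have "pmf (pr (last h)) a \<noteq> 0" using assms by (simp add: step_prob_def)
  then have "a \<in> set_pmf (pr (last h))" by (simp add: set_pmf_iff)
  with wf n show ?thesis unfolding wf_mdp_def by auto
qed

lemma pattern:
  assumes st: "is_strategy MM \<sigma>"
  shows "h \<noteq> [] \<Longrightarrow> cyl_prob MM 0 \<sigma> h \<noteq> 0 \<Longrightarrow>
    (length h mod 3 = 1 \<longrightarrow> last h = 0) \<and> (length h mod 3 = 2 \<longrightarrow> 3 \<le> last h) \<and>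
    (length h mod 3 = 0 \<longrightarrow> last h = 1 \<or> last h = 2)"
proof (induction h rule: rev_induct)
  case Nil then show ?case by simp
next
  case (snoc a h)
  show ?case
  proof (cases "h = []")
    case True
    then show ?thesis using snoc.prems by (simp add: cyl_prob_single split: if_splits)
  next
    case False
    have c: "cyl_prob MM 0 \<sigma> h * step_prob MM \<sigma> h a \<noteq> 0"
      using snoc.prems cyl_prob_snoc[OF False] by simp
    then have IH: "(length h mod 3 = 1 \<longrightarrow> last h = 0) \<and> (length h mod 3 = 2 \<longrightarrow> 3 \<le> last h) \<and>
      (length h mod 3 = 0 \<longrightarrow> last h = 1 \<or> last h = 2)" using snoc.IH False by simp
    have a: "a \<in> sc (last h)" using step_nz[OF st _ False] c by simp
    have "length h mod 3 = 0 \<or> length h mod 3 = 1 \<or> length h mod 3 = 2" by auto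
    then show ?thesis using IH a by (auto simp: sc_def mod_Suc split: if_splits)
  qed
qed

lemma upd_ext_set:
  assumes "\<forall>m\<in>Mem. \<forall>t. set_pmf (upd m t) \<subseteq> Mem"
  shows "set_pmf d \<subseteq> Mem \<Longrightarrow> set_pmf (foldl (\<lambda>d t. bind_pmf d (\<lambda>m. upd m t)) d w) \<subseteq> Mem"
proof (induction w arbitrary: d)
  case Nil then show ?case by simp
next
  case (Cons t w)
  have "set_pmf (bind_pmf d (\<lambda>m. upd m t)) \<subseteq> Mem" using Cons.prems assms by (auto simp: set_bind_pmf)
  then show ?case using Cons.IH by simp
qed

context
  fixes \<sigma> \<mu> Mem m0 upd sel
  assumes st: "is_strategy MM \<sigma>" and finM: "finite Mem"
    and wt: "wf_transducer MM Mem m0 upd sel" and ind: "induces MM m0 upd sel \<sigma>"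
    and pm: "is_play_measure MM 0 \<sigma> \<mu>"
begin

lemma P: "prob_space \<mu>" using pm by (simp add: is_play_measure_def)

lemma sets_mu: "sets \<mu> = sets (stream_space (count_space UNIV))"
  using pm by (simp add: is_play_measure_def)

lemma cyl_mu: "measure \<mu> {\<omega>. stake (length h) \<omega> = h} = cyl_prob MM 0 \<sigma> h"
  using pm by (simp add: is_play_measure_def)

lemma to_mu: "A \<in> sets (stream_space (count_space UNIV)) \<Longrightarrow> A \<in> sets \<mu>"
  by (simp add: sets_mu)

lemma meas_stake: "{\<omega>. stake n \<omega> \<in> T} \<in> sets \<mu>"
proof -
  have "stake n -` T \<inter> space (stream_space (count_space UNIV)) \<in> sets (stream_space (count_space UNIV))"
    by (rule measurable_sets[OF measurable_stake]) simp
  then show ?thesis by (simp add: sets_mu space_stream_space vimage_def)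
qed

lemma meas_snth: "{\<omega>. \<omega> !! i \<in> A} \<in> sets \<mu>"
proof -
  have "(\<lambda>\<omega>. \<omega> !! i) -` A \<inter> space (stream_space (count_space UNIV)) \<in> sets (stream_space (count_space UNIV))"
    by (rule measurable_sets[OF measurable_snth]) simp
  then show ?thesis by (simp add: sets_mu space_stream_space vimage_def)
qed

lemma q_exists: "\<exists>q>0. q \<le> 1 \<and> (\<exists>N0. finite N0 \<and>
   (\<forall>h. h \<noteq> [] \<longrightarrow> last h = 0 \<longrightarrow> q \<le> (\<Sum>n\<in>N0. pmf (\<sigma> h) (n+3) * (1/2)^n)))"
proof -
  have m0: "m0 \<in> Mem" and updM: "\<forall>m\<in>Mem. \<forall>t. set_pmf (upd m t) \<subseteq> Mem"
    and selM: "\<And>m. m \<in> Mem \<Longrightarrow> set_pmf (sel m 0) \<subseteq> sc 0"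
    using wt by (auto simp: wf_transducer_def)
  define nm where "nm m = (SOME y. y \<in> set_pmf (sel m 0)) - 3" for m
  have nmp: "0 < pmf (sel m 0) (nm m + 3)" if "m \<in> Mem" for m
  proof -
    let ?y = "SOME y. y \<in> set_pmf (sel m 0)"
    have "?y \<in> set_pmf (sel m 0)" using set_pmf_not_empty[of "sel m 0"] by (auto intro: someI_ex)
    moreover then have "3 \<le> ?y" using selM[OF that] by (auto simp: sc_def)
    ultimately show ?thesis by (simp add: nm_def pmf_positive)
  qed
  define v where "v m = pmf (sel m 0) (nm m + 3) * (1/2)^(nm m)" for m
  define q where "q = Min (v ` Mem)"
  have vpos: "0 < v m" if "m \<in> Mem" for m using nmp[OF that] by (simp add: v_def)
  have qpos: "0 < q" unfolding q_def using finM m0 vpos by (subst Min_gr_iff) auto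
  have qv: "q \<le> v m" if "m \<in> Mem" for m unfolding q_def using finM that by simp
  have "v m0 \<le> 1" unfolding v_def by (intro mult_le_one) (auto simp: pmf_le_1 power_le_one)
  then have q1: "q \<le> 1" using qv[OF m0] by simp
  define N0 where "N0 = nm ` Mem"
  have "q \<le> (\<Sum>n\<in>N0. pmf (\<sigma> h) (n+3) * (1/2)^n)" if h: "h \<noteq> []" "last h = 0" for h
  proof -
    define Dm where "Dm = upd_ext upd (butlast h) m0"
    have DmM: "set_pmf Dm \<subseteq> Mem" unfolding Dm_def upd_ext_def
      by (rule upd_ext_set[OF updM]) (simp add: m0)
    have sh: "\<sigma> h = bind_pmf Dm (\<lambda>m. sel m 0)"
      using ind h unfolding induces_def Dm_def by auto
    have pm: "pmf (\<sigma> h) x = (\<Sum>m\<in>Mem. pmf (sel m 0) x * pmf Dm m)" for x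
      unfolding sh pmf_bind using DmM finM by (intro integral_measure_pmf_real) auto
    have "(\<Sum>n\<in>N0. pmf (\<sigma> h) (n+3) * (1/2)^n)
        = (\<Sum>m\<in>Mem. pmf Dm m * (\<Sum>n\<in>N0. pmf (sel m 0) (n+3) * (1/2)^n))"
      unfolding pm sum_distrib_left sum_distrib_right
      by (subst sum.swap) (simp add: mult_ac)
    also have "\<dots> \<ge> (\<Sum>m\<in>Mem. pmf Dm m * q)"
    proof (intro sum_mono mult_left_mono)
      fix m assume m: "m \<in> Mem"
      have "v m \<le> (\<Sum>n\<in>N0. pmf (sel m 0) (n+3) * (1/2)^n)"
        unfolding v_def using finM m N0_def by (intro member_le_sum) auto
      then show "q \<le> (\<Sum>n\<in>N0. pmf (sel m 0) (n+3) * (1/2)^n)" using qv[OF m] by simp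
    qed simp
    also have "(\<Sum>m\<in>Mem. pmf Dm m * q) = q"
      using sum_pmf_eq_1[OF finM DmM] by (simp add: sum_distrib_right[symmetric])
    finally show ?thesis .
  qed
  then show ?thesis using qpos q1 finM N0_def by blast
qed


lemma stake2:
  assumes "length h = L"
  shows "stake (Suc (Suc L)) \<omega> = h @ [a, b] \<longleftrightarrow> (stake L \<omega> = h \<and> \<omega> !! L = a \<and> \<omega> !! Suc L = b)"
proof -
  have "stake (Suc (Suc L)) \<omega> = stake L \<omega> @ [\<omega> !! L, \<omega> !! Suc L]" unfolding stake_Suc by simp
  then show ?thesis using assms by auto
qed

lemma per_h:
  assumes qp: "0 < q" "q \<le> 1" "finite N0"
    and qb: "\<forall>h. h \<noteq> [] \<longrightarrow> last h = 0 \<longrightarrow> q \<le> (\<Sum>n\<in>N0. pmf (\<sigma> h) (n+3) * (1/2)^n)"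
    and len: "length h = 3*k+1"
  shows "measure \<mu> {\<omega>. stake (3*k+1) \<omega> = h \<and> \<omega> !! (3*k+2) \<noteq> 2}
     \<le> (1-q) * measure \<mu> {\<omega>. stake (3*k+1) \<omega> = h}"
proof -
  interpret prob_space \<mu> by (rule P)
  define L where "L = 3*k+1"
  define C where "C = {\<omega>. stake L \<omega> = h}"
  define B where "B = {\<omega>. stake L \<omega> = h \<and> \<omega> !! Suc L = 2}"
  have CB: "{\<omega>. stake (3*k+1) \<omega> = h \<and> \<omega> !! (3*k+2) \<noteq> 2} = C - B"
    by (auto simp: C_def B_def L_def)
  have Cm: "C \<in> sets \<mu>" unfolding C_def using meas_stake[of L "{h}"] by simp
  have Bm: "B \<in> sets \<mu>" unfolding B_def
    using sets.Int[OF meas_stake[of L "{h}"] meas_snth[of "Suc L" "{2}"]] by (simp add: Collect_conj_eq)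
  have BC: "B \<subseteq> C" by (auto simp: B_def C_def)
  have mC: "measure \<mu> C = cyl_prob MM 0 \<sigma> h" using cyl_mu[of h] len by (simp add: C_def L_def)
  have CC: "{\<omega>. stake (3*k+1) \<omega> = h} = C" by (simp add: C_def L_def)
  show ?thesis unfolding CB CC
  proof (cases "cyl_prob MM 0 \<sigma> h = 0")
    case True
    have "measure \<mu> (C - B) \<le> measure \<mu> C" using Cm by (intro finite_measure_mono) auto
    then show "measure \<mu> (C - B) \<le> (1-q) * measure \<mu> C" using True mC by simp
  next
    case False
    have hne: "h \<noteq> []" using len by auto
    have lh: "last h = 0" using pattern[OF st hne False] len by simp
    define X where "X n = {\<omega>. stake (Suc (Suc L)) \<omega> = h @ [n+3, 2]}" for n
    have lenL: "length h = L" using len by (simp add: L_def)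
    have XB: "(\<Union>n\<in>N0. X n) \<subseteq> B" using stake2[OF lenL] by (auto simp: X_def B_def)
    have Xm: "X n \<in> sets \<mu>" for n unfolding X_def using meas_stake[of "Suc (Suc L)" "{h @ [n+3, 2]}"] by simp
    have Xd: "disjoint_family_on X N0" using stake2[OF lenL] by (auto simp: disjoint_family_on_def X_def)
    have cp: "measure \<mu> (X n) = cyl_prob MM 0 \<sigma> h * (pmf (\<sigma> h) (n+3) * (1/2)^n)" for n
    proof -
      have "measure \<mu> (X n) = cyl_prob MM 0 \<sigma> ((h @ [n+3]) @ [2])"
        using cyl_mu[of "h @ [n+3, 2]"] lenL by (simp add: X_def)
      also have "\<dots> = cyl_prob MM 0 \<sigma> h * step_prob MM \<sigma> h (n+3) * step_prob MM \<sigma> (h @ [n+3]) 2"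
        using cyl_prob_snoc[of "h @ [n+3]"] cyl_prob_snoc[OF hne] by simp
      also have "step_prob MM \<sigma> h (n+3) = pmf (\<sigma> h) (n+3)" using lh by (simp add: step_prob_def)
      also have "step_prob MM \<sigma> (h @ [n+3]) 2 = pmf (pr (n+3)) 2" by (simp add: step_prob_def)
      also have "pmf (pr (n+3)) 2 = (1/2)^n" by (rule pmf_pr2)
      finally show ?thesis by simp
    qed
    have "measure \<mu> (\<Union>n\<in>N0. X n) = (\<Sum>n\<in>N0. measure \<mu> (X n))"
      by (rule measure_finite_Union) (use Xm Xd qp in auto)
    also have "\<dots> = cyl_prob MM 0 \<sigma> h * (\<Sum>n\<in>N0. pmf (\<sigma> h) (n+3) * (1/2)^n)"
      by (simp add: cp sum_distrib_left)
    finally have e: "measure \<mu> (\<Union>n\<in>N0. X n) = cyl_prob MM 0 \<sigma> h * (\<Sum>n\<in>N0. pmf (\<sigma> h) (n+3) * (1/2)^n)" .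
    have c0: "0 \<le> cyl_prob MM 0 \<sigma> h" using mC measure_nonneg[of \<mu> C] by simp
    have "cyl_prob MM 0 \<sigma> h * q \<le> cyl_prob MM 0 \<sigma> h * (\<Sum>n\<in>N0. pmf (\<sigma> h) (n+3) * (1/2)^n)"
      using qb hne lh c0 by (intro mult_left_mono) auto
    also have "\<dots> \<le> measure \<mu> B" using e finite_measure_mono[OF XB Bm] by simp
    finally have "cyl_prob MM 0 \<sigma> h * q \<le> measure \<mu> B" .
    then have "measure \<mu> (C - B) \<le> (1-q) * cyl_prob MM 0 \<sigma> h"
      using finite_measure_Diff[OF Cm Bm BC] mC by (simp add: algebra_simps)
    then show "measure \<mu> (C - B) \<le> (1-q) * measure \<mu> C" using mC by simp
  qed
qed

lemma sumT:
  assumes per: "\<And>h. length h = L \<Longrightarrow> measure \<mu> {\<omega>. stake L \<omega> = h \<and> \<omega> !! i \<noteq> 2} \<le> c * measure \<mu> {\<omega>. stake L \<omega> = h}"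
    and c: "0 \<le> c"
  shows "measure \<mu> {\<omega>. stake L \<omega> \<in> T \<and> \<omega> !! i \<noteq> 2} \<le> c * measure \<mu> {\<omega>. stake L \<omega> \<in> T}"
proof -
  interpret prob_space \<mu> by (rule P)
  define I where "I = {h \<in> T. length h = L}"
  define X where "X h = {\<omega>. stake L \<omega> = h \<and> \<omega> !! i \<noteq> 2}" for h :: "nat list"
  define Y where "Y h = {\<omega>. stake L \<omega> = h}" for h :: "nat list"
  have cI: "countable I" by (rule countableI_type)
  have Xm: "X h \<in> sets \<mu>" for h unfolding X_def
    using sets.Int[OF meas_stake[of L "{h}"] meas_snth[of i "-{2}"]] by (simp add: Collect_conj_eq)
  have Ym: "Y h \<in> sets \<mu>" for h unfolding Y_def using meas_stake[of L "{h}"] by simp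
  have e1: "{\<omega>. stake L \<omega> \<in> T \<and> \<omega> !! i \<noteq> 2} = (\<Union>h\<in>I. X h)" by (auto simp: I_def X_def)
  have e2: "{\<omega>. stake L \<omega> \<in> T} = (\<Union>h\<in>I. Y h)" by (auto simp: I_def Y_def)
  have dX: "disjoint_family_on X I" by (auto simp: disjoint_family_on_def X_def)
  have dY: "disjoint_family_on Y I" by (auto simp: disjoint_family_on_def Y_def)
  have "emeasure \<mu> (\<Union>h\<in>I. X h) = (\<integral>\<^sup>+h. emeasure \<mu> (X h) \<partial>count_space I)"
    by (rule emeasure_UN_countable) (use Xm cI dX in auto)
  also have "\<dots> \<le> (\<integral>\<^sup>+h. ennreal c * emeasure \<mu> (Y h) \<partial>count_space I)"
  proof (rule nn_integral_mono)
    fix h assume "h \<in> space (count_space I)"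
    then have "length h = L" by (simp add: I_def)
    then have "measure \<mu> (X h) \<le> c * measure \<mu> (Y h)" using per unfolding X_def Y_def by blast
    then show "emeasure \<mu> (X h) \<le> ennreal c * emeasure \<mu> (Y h)"
      by (simp add: emeasure_eq_measure ennreal_mult[symmetric] c)
  qed
  also have "\<dots> = ennreal c * (\<integral>\<^sup>+h. emeasure \<mu> (Y h) \<partial>count_space I)"
    by (rule nn_integral_cmult) simp
  also have "(\<integral>\<^sup>+h. emeasure \<mu> (Y h) \<partial>count_space I) = emeasure \<mu> (\<Union>h\<in>I. Y h)"
    by (rule emeasure_UN_countable[symmetric]) (use Ym cI dY in auto)
  finally have "ennreal (measure \<mu> (\<Union>h\<in>I. X h)) \<le> ennreal (c * measure \<mu> (\<Union>h\<in>I. Y h))"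
    by (simp add: emeasure_eq_measure ennreal_mult c)
  then show ?thesis using e1 e2 c by (simp add: ennreal_le_iff)
qed

lemma decay:
  assumes qp: "0 < q" "q \<le> 1" "finite N0"
    and qb: "\<forall>h. h \<noteq> [] \<longrightarrow> last h = 0 \<longrightarrow> q \<le> (\<Sum>n\<in>N0. pmf (\<sigma> h) (n+3) * (1/2)^n)"
  shows "measure \<mu> {\<omega>. \<forall>j<K. \<omega> !! (3*(N+j)+2) \<noteq> 2} \<le> (1-q)^K"
proof (induction K)
  case 0
  interpret prob_space \<mu> by (rule P)
  show ?case by simp
next
  case (Suc K)
  interpret prob_space \<mu> by (rule P)
  define k where "k = N+K"
  define T where "T = {xs::nat list. \<forall>j<K. xs ! (3*(N+j)+2) \<noteq> 2}"
  have lt: "j < K \<Longrightarrow> 3*(N+j)+2 < 3*k+1" for j by (simp add: k_def)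
  have e: "{\<omega>. \<forall>j<Suc K. \<omega> !! (3*(N+j)+2) \<noteq> 2} = {\<omega>. stake (3*k+1) \<omega> \<in> T \<and> \<omega> !! (3*k+2) \<noteq> 2}"
    using lt by (auto simp: T_def k_def less_Suc_eq)
  have e2: "{\<omega>. stake (3*k+1) \<omega> \<in> T} = {\<omega>. \<forall>j<K. \<omega> !! (3*(N+j)+2) \<noteq> 2}"
    using lt by (auto simp: T_def)
  have "measure \<mu> {\<omega>. stake (3*k+1) \<omega> \<in> T \<and> \<omega> !! (3*k+2) \<noteq> 2} \<le> (1-q) * measure \<mu> {\<omega>. stake (3*k+1) \<omega> \<in> T}"
    by (rule sumT) (use per_h[OF qp qb] qp in auto)
  also have "\<dots> \<le> (1-q) * (1-q)^K" using Suc.IH e2 qp by (intro mult_left_mono) auto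
  finally show ?case using e by simp
qed

lemma part1_main: "measure \<mu> (Parity MM Col0) = 0"
proof -
  interpret prob_space \<mu> by (rule P)
  obtain q N0 where qp: "0 < q" "q \<le> 1" "finite N0"
    and qb: "\<forall>h. h \<noteq> [] \<longrightarrow> last h = 0 \<longrightarrow> q \<le> (\<Sum>n\<in>N0. pmf (\<sigma> h) (n+3) * (1/2)^n)"
    using q_exists by blast
  define B where "B N = {\<omega>::nat stream. \<forall>i\<ge>N. \<omega> !! i \<noteq> 2}" for N
  have Bm: "B N \<in> sets \<mu>" for N
  proof -
    have sn: "{\<omega>. \<omega> !! i \<noteq> 2} \<in> sets \<mu>" for i using meas_snth[of i "-{2}"] by simp
    have "B N = (\<Inter>i\<in>{N..}. {\<omega>. \<omega> !! i \<noteq> 2})" by (auto simp: B_def)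
    also have "\<dots> \<in> sets \<mu>" using sn by (intro sets.countable_INT) auto
    finally show ?thesis .
  qed
  have B0: "measure \<mu> (B N) = 0" for N
  proof -
    have le: "measure \<mu> (B N) \<le> (1-q)^K" for K
    proof -
      define T where "T = {xs::nat list. \<forall>j<K. xs ! (3*(N+j)+2) \<noteq> 2}"
      have lt: "j < K \<Longrightarrow> 3*(N+j)+2 < 3*(N+K)" for j by simp
      have eT: "{\<omega>. \<forall>j<K. \<omega> !! (3*(N+j)+2) \<noteq> 2} = {\<omega>. stake (3*(N+K)) \<omega> \<in> T}"
        using lt by (auto simp: T_def)
      have "B N \<subseteq> {\<omega>. \<forall>j<K. \<omega> !! (3*(N+j)+2) \<noteq> 2}"
      proof (intro subsetI CollectI allI impI)
        fix \<omega> j assume "\<omega> \<in> B N" "j < K"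
        have "N \<le> 3*(N+j)+2" by simp
        then show "\<omega> !! (3*(N+j)+2) \<noteq> 2" using \<open>\<omega> \<in> B N\<close> unfolding B_def by blast
      qed
      moreover have "{\<omega>. \<forall>j<K. \<omega> !! (3*(N+j)+2) \<noteq> 2} \<in> sets \<mu>" unfolding eT by (rule meas_stake)
      ultimately have "measure \<mu> (B N) \<le> measure \<mu> {\<omega>. \<forall>j<K. \<omega> !! (3*(N+j)+2) \<noteq> 2}"
        by (rule finite_measure_mono)
      also have "\<dots> \<le> (1-q)^K" by (rule decay[OF qp qb])
      finally show ?thesis .
    qed
    have "(\<lambda>K. (1-q)^K) \<longlonglongrightarrow> 0" by (rule LIMSEQ_power_zero) (use qp in auto)
    then have "measure \<mu> (B N) \<le> 0" using le by (intro LIMSEQ_le_const) auto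
    then show ?thesis using measure_nonneg[of \<mu> "B N"] by linarith
  qed
  have sub: "Parity MM Col0 \<subseteq> (\<Union>N. B N)"
  proof
    fix \<omega> assume "\<omega> \<in> Parity MM Col0"
    then have "\<forall>\<^sub>\<infinity>i. \<omega> !! i \<noteq> 2" by (simp add: Parity_char)
    then obtain m where "\<forall>i\<ge>m. \<omega> !! i \<noteq> 2" by (auto simp: MOST_nat_le)
    then show "\<omega> \<in> (\<Union>N. B N)" by (auto simp: B_def)
  qed
  have "(\<Union>N. B N) \<in> null_sets \<mu>"
    using Bm B0 by (intro null_sets_UN null_setsI) (auto simp: emeasure_eq_measure)
  then have "(\<Union>N. B N) \<in> sets \<mu>" "measure \<mu> (\<Union>N. B N) = 0"
    by (auto simp: null_sets_def emeasure_eq_measure)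
  then have "measure \<mu> (Parity MM Col0) \<le> 0" using finite_measure_mono[OF sub] by simp
  then show ?thesis using measure_nonneg[of \<mu> "Parity MM Col0"] by linarith
qed

end




definition play :: "nat \<Rightarrow> nat \<Rightarrow> nat" where
  "play i x = (if i mod 3 = 0 then 0 else if i mod 3 = 1 then i div 3 + 3
               else if i div 3 \<le> x then 2 else 1)"

definition FF :: "nat stream \<Rightarrow> nat stream" where
  "FF X = to_stream (\<lambda>i. play i (X !! (i div 3)))"

lemma FF_nth[simp]: "FF X !! i = play i (X !! (i div 3))"
  by (simp add: FF_def to_stream_def)

lemma shd_FF[simp]: "shd (FF X) = 0"
  using FF_nth[of X 0] by (simp add: play_def)

definition sig :: "nat list \<Rightarrow> nat pmf" where "sig h = return_pmf (length h div 3 + 3)"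

abbreviation "SS \<equiv> stream_space (measure_pmf D)"
abbreviation "SC \<equiv> stream_space (count_space (UNIV :: nat set))"

lemma sets_SS: "sets SS = sets SC"
  by (rule sets_stream_space_cong) simp

lemma space_SS[simp]: "space SS = UNIV" by (simp add: space_stream_space)

lemma SC_stake: "{\<omega>. stake n \<omega> \<in> T} \<in> sets SC"
proof -
  have "stake n -` T \<inter> space SC \<in> sets SC"
    by (rule measurable_sets[OF measurable_stake]) simp
  then show ?thesis by (simp add: space_stream_space vimage_def)
qed

lemma SS_stake: "{\<omega>. stake n \<omega> \<in> T} \<in> sets SS" using SC_stake sets_SS by simp

lemma SS_prob: "prob_space SS" by (rule prob_space.prob_space_stream_space[OF measure_pmf.prob_space_axioms])

lemma stake_conj: "{X. P (stake j X) \<and> X !! j \<in> A} =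
    {X. stake (Suc j) X \<in> {xs. P (take j xs) \<and> xs ! j \<in> A}}"
  by (auto simp: take_stake simp del: stake.simps)

lemma indep: "measure SS {X. P (stake j X) \<and> X !! j \<in> A} =
    measure SS {X. P (stake j X)} * measure_pmf.prob D A"
proof (induction j arbitrary: P)
  case 0
  interpret S: prob_space SS by (rule SS_prob)
  show ?case
  proof (cases "P []")
    case True
    have m: "{X \<in> space SS. X !! 0 \<in> A} \<in> sets SS"
      using SS_stake[of "Suc 0" "{xs. xs ! 0 \<in> A}"] by simp
    have "ennreal (measure SS {X. X !! 0 \<in> A}) = (\<integral>\<^sup>+t. ennreal (measure SS {X. t \<in> A}) \<partial>D)"
      using prob_space.prob_stream_space[OF measure_pmf.prob_space_axioms m] by simp
    also have "\<dots> = (\<integral>\<^sup>+t. indicator A t \<partial>D)"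
      using S.prob_space by (intro nn_integral_cong) (auto split: split_indicator)
    also have "\<dots> = emeasure D A" by simp
    also have "\<dots> = ennreal (measure_pmf.prob D A)" by (simp add: measure_pmf.emeasure_eq_measure)
    finally have "measure SS {X. X !! 0 \<in> A} = measure_pmf.prob D A" by simp
    then show ?thesis using True S.prob_space by simp
  next
    case False then show ?thesis by simp
  qed
next
  case (Suc j)
  have m1: "{X \<in> space SS. P (stake (Suc j) X) \<and> X !! Suc j \<in> A} \<in> sets SS"
    using SS_stake[of "Suc (Suc j)" "{xs. P (take (Suc j) xs) \<and> xs ! Suc j \<in> A}"]
    unfolding stake_conj[symmetric] by simp
  have m2: "{X \<in> space SS. P (stake (Suc j) X)} \<in> sets SS"
    using SS_stake[of "Suc j" "{xs. P xs}"] by simp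
  have "ennreal (measure SS {X. P (stake (Suc j) X) \<and> X !! Suc j \<in> A})
      = (\<integral>\<^sup>+t. ennreal (measure SS {X. P (t # stake j X) \<and> X !! j \<in> A}) \<partial>D)"
    using prob_space.prob_stream_space[OF measure_pmf.prob_space_axioms m1] by simp
  also have "\<dots> = (\<integral>\<^sup>+t. ennreal (measure SS {X. P (t # stake j X)}) * ennreal (measure_pmf.prob D A) \<partial>D)"
  proof (intro nn_integral_cong)
    fix t
    show "ennreal (measure SS {X. P (t # stake j X) \<and> X !! j \<in> A}) =
        ennreal (measure SS {X. P (t # stake j X)}) * ennreal (measure_pmf.prob D A)"
      using Suc.IH[of "\<lambda>xs. P (t # xs)"] by (simp add: ennreal_mult)
  qed
  also have "\<dots> = (\<integral>\<^sup>+t. ennreal (measure SS {X. P (t # stake j X)}) \<partial>D) * ennreal (measure_pmf.prob D A)"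
    by (rule nn_integral_multc) simp
  also have "(\<integral>\<^sup>+t. ennreal (measure SS {X. P (t # stake j X)}) \<partial>D) = ennreal (measure SS {X. P (stake (Suc j) X)})"
    using prob_space.prob_stream_space[OF measure_pmf.prob_space_axioms m2] by simp
  finally show ?case by (simp add: ennreal_mult[symmetric])
qed

lemma FF_dep:
  assumes L: "L \<le> 3*j+2"
  shows "stake L (FF X) = stake L (FF (stake j X @- Y))"
proof -
  have "FF X !! i = FF (stake j X @- Y) !! i" if "i < L" for i
  proof (cases "i mod 3 = 2")
    case True
    have "i = 3 * (i div 3) + i mod 3" by simp
    then have "i div 3 < j" using True that L by linarith
    then show ?thesis by simp
  next
    case False then show ?thesis by (simp add: play_def)
  qed
  then show ?thesis by (intro nth_equalityI) auto
qed

lemma m0: "L mod 3 = (0::nat) \<Longrightarrow> 1 \<le> L \<Longrightarrow> (L - 1) mod 3 = 2"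
  by (cases L) (auto simp: mod_Suc split: if_splits)
lemma m1: "L mod 3 = (1::nat) \<Longrightarrow> (L - 1) mod 3 = 0"
  by (cases L) (auto simp: mod_Suc split: if_splits)
lemma m2: "L mod 3 = (2::nat) \<Longrightarrow> L = 3 * (L div 3) + 2"
  by (metis div_mult_mod_eq mult.commute)
lemma m3: "L = 3 * j + (2::nat) \<Longrightarrow> (L - 1) mod 3 = 1 \<and> (L - 1) div 3 = j"
  by simp

lemma cyl2: "measure SS {X. stake (length h) (FF X) = h} = cyl_prob MM 0 sig h"
proof (induction h rule: rev_induct)
  case Nil
  interpret S: prob_space SS by (rule SS_prob)
  show ?case using S.prob_space by simp
next
  case (snoc a h)
  interpret S: prob_space SS by (rule SS_prob)
  show ?case
  proof (cases "h = []")
    case True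
    then show ?thesis using S.prob_space by (simp add: cyl_prob_single)
  next
    case hne: False
    define L where "L = length h"
    have L1: "1 \<le> L" using hne by (simp add: L_def Suc_le_eq)
    have S'eq: "{X. stake (length (h@[a])) (FF X) = h@[a]} =
        {X. stake L (FF X) = h \<and> play L (X !! (L div 3)) = a}"
      by (auto simp: L_def stake_Suc simp del: stake.simps)
    have cs: "cyl_prob MM 0 sig (h@[a]) = cyl_prob MM 0 sig h * step_prob MM sig h a"
      by (rule cyl_prob_snoc[OF hne])
    have IH: "measure SS {X. stake L (FF X) = h} = cyl_prob MM 0 sig h" using snoc.IH L_def by simp
    show ?thesis
    proof (cases "{X. stake L (FF X) = h} = {}")
      case True
      then have c0: "cyl_prob MM 0 sig h = 0" using IH by simp
      have E: "{X. stake L (FF X) = h \<and> play L (X !! (L div 3)) = a} = {}" using True by auto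
      show ?thesis unfolding S'eq cs E using c0 by simp
    next
      case False
      then obtain X0 where X0: "stake L (FF X0) = h" by auto
      have "last h = h ! (L - 1)" using hne by (simp add: last_conv_nth L_def)
      also have "h ! (L - 1) = stake L (FF X0) ! (L - 1)" using X0 by simp
      also have "\<dots> = FF X0 !! (L - 1)" using L1 by simp
      finally have lasth: "last h = play (L-1) (X0 !! ((L-1) div 3))" by simp
      consider "L mod 3 = 0" | "L mod 3 = 1" | "L mod 3 = 2" using mod_less_divisor[of 3 L] by linarith
      then show ?thesis
      proof cases
        case 1
        have pl: "play L x = 0" for x using 1 by (simp add: play_def)
        have "(L - 1) mod 3 = 2" using 1 L1 by (rule m0)
        then have lh: "last h = 1 \<or> last h = 2" using lasth by (simp add: play_def)
        have "step_prob MM sig h a = (if a = 0 then 1 else 0)" using lh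
          by (auto simp: step_prob_def pr_def split: split_indicator)
        then show ?thesis using S'eq cs IH pl by auto
      next
        case 2
        have pl: "play L x = L div 3 + 3" for x using 2 by (simp add: play_def)
        have "(L - 1) mod 3 = 0" using 2 by (rule m1)
        then have lh: "last h = 0" using lasth by (simp add: play_def)
        have "step_prob MM sig h a = (if a = L div 3 + 3 then 1 else 0)" using lh
          by (auto simp: step_prob_def sig_def L_def split: split_indicator)
        then show ?thesis using S'eq cs IH pl by auto
      next
        case 3
        define j where "j = L div 3"
        have Lj: "L = 3*j+2" using m2[OF 3] unfolding j_def .
        have "(L - 1) mod 3 = 1" "(L - 1) div 3 = j" using m3[OF Lj] by auto
        then have lh: "last h = j + 3" using lasth by (simp add: play_def)
        have pl: "play L x = (if j \<le> x then 2 else 1)" for x using 3 by (simp add: play_def j_def)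
        have pre: "(\<lambda>x. if j \<le> x then 2 else (1::nat)) -` {a} = {x. (if j \<le> x then 2 else 1) = a}" by auto
        have st: "step_prob MM sig h a = measure_pmf.prob D {x. (if j \<le> x then 2 else 1) = a}"
          using lh by (simp add: step_prob_def pr_def pmf_map pre)
        have depX: "stake L (FF X) = stake L (FF (stake j X @- sconst 0))" for X
          by (rule FF_dep) (simp add: Lj)
        have "{X. stake L (FF X) = h \<and> play L (X !! (L div 3)) = a} =
           {X. (\<lambda>xs. stake L (FF (xs @- sconst 0)) = h) (stake j X) \<and> X !! j \<in> {x. (if j \<le> x then 2 else 1) = a}}"
        proof (rule Collect_cong)
          fix X
          show "(stake L (FF X) = h \<and> play L (X !! (L div 3)) = a) =
            ((\<lambda>xs. stake L (FF (xs @- sconst 0)) = h) (stake j X) \<and> X !! j \<in> {x. (if j \<le> x then 2 else 1) = a})"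
            using depX[of X] pl[of "X !! j"] j_def by simp
        qed
        also have "measure SS \<dots> = measure SS {X. (\<lambda>xs. stake L (FF (xs @- sconst 0)) = h) (stake j X)} *
            measure_pmf.prob D {x. (if j \<le> x then 2 else 1) = a}"
          by (rule indep)
        also have "{X. (\<lambda>xs. stake L (FF (xs @- sconst 0)) = h) (stake j X)} = {X. stake L (FF X) = h}"
          using depX by auto
        finally show ?thesis using S'eq cs IH st by simp
      qed
    qed
  qed
qed




lemma FF_meas: "FF \<in> measurable SS SC"
proof (rule measurable_stream_space2)
  fix n
  have a: "(\<lambda>X. X !! (n div 3)) \<in> measurable SS (measure_pmf D)" by (rule measurable_snth)
  have b: "play n \<in> measurable (measure_pmf D) (count_space UNIV)" by simp
  show "(\<lambda>X. FF X !! n) \<in> measurable SS (count_space UNIV)"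
    using measurable_compose[OF a b] by simp
qed

definition mu2 where "mu2 = distr SS SC FF"

lemma upd_ext_ret: "foldl (\<lambda>d t. bind_pmf d (\<lambda>m. return_pmf (Suc m))) (return_pmf m) w = return_pmf (m + length w)"
  by (induction w arbitrary: m) (auto simp: bind_return_pmf)

lemma HD: "HD_strategy MM sig"
proof -
  have st: "is_strategy MM sig" by (auto simp: is_strategy_def sig_def sc_def)
  have wt: "wf_transducer MM UNIV 0 (\<lambda>m t. return_pmf (Suc m)) (\<lambda>m t. return_pmf (Suc m div 3 + 3))"
    by (auto simp: wf_transducer_def sc_def)
  have ind: "induces MM 0 (\<lambda>m t. return_pmf (Suc m)) (\<lambda>m t. return_pmf (Suc m div 3 + 3)) sig"
    unfolding induces_def upd_ext_def
  proof (intro allI impI)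
    fix h :: "nat list" assume "h \<noteq> [] \<and> last h \<in> player MM"
    then have "Suc (length h - 1) = length h" by (cases h) auto
    then show "sig h = bind_pmf (foldl (\<lambda>d t. bind_pmf d (\<lambda>m. return_pmf (Suc m))) (return_pmf 0) (butlast h))
        (\<lambda>m. return_pmf (Suc m div 3 + 3))"
      by (simp add: upd_ext_ret sig_def bind_return_pmf)
  qed
  show ?thesis unfolding HD_strategy_def using st wt ind by blast
qed

lemma play_succ: "play (Suc i) y \<in> sc (play i x)"
proof -
  consider "i mod 3 = 0" | "i mod 3 = 1" | "i mod 3 = 2" using mod_less_divisor[of 3 i] by linarith
  then show ?thesis
  proof cases
    case 1
    then have "Suc i mod 3 = 1" by (simp add: mod_Suc)
    then show ?thesis using 1 by (simp add: play_def sc_def)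
  next
    case 2
    then have "Suc i mod 3 = 2" by (simp add: mod_Suc)
    then show ?thesis using 2 by (simp add: play_def sc_def)
  next
    case 3
    then have "Suc i mod 3 = 0" by (simp add: mod_Suc)
    then show ?thesis using 3 by (simp add: play_def sc_def)
  qed
qed

lemma FF_play: "is_play MM (FF X)"
  unfolding is_play_def FF_nth MM_simps by (intro allI play_succ)

lemma Parity_meas: "Parity MM Col0 \<in> sets SC"
proof -
  have e: "Parity MM Col0 = (\<Inter>i. {\<omega>. stake (Suc (Suc i)) \<omega> \<in> {xs. xs ! Suc i \<in> sc (xs ! i)}}) \<inter>
      (\<Union>N. \<Inter>i\<in>{N..}. {\<omega>. stake (Suc i) \<omega> \<in> {xs. xs ! i \<noteq> 2}})"
    unfolding Parity_char is_play_def by (auto simp: MOST_nat_le simp del: stake.simps)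
  have a: "range (\<lambda>i. {\<omega>. stake (Suc (Suc i)) \<omega> \<in> {xs. xs ! Suc i \<in> sc (xs ! i)}}) \<subseteq> sets SC"
    using SC_stake by blast
  have b: "(\<lambda>i. {\<omega>. stake (Suc i) \<omega> \<in> {xs. xs ! i \<noteq> 2}}) ` {N..} \<subseteq> sets SC" for N :: nat
    using SC_stake by blast
  have c: "range (\<lambda>N. \<Inter>i\<in>{N..}. {\<omega>. stake (Suc i) \<omega> \<in> {xs. xs ! i \<noteq> (2::nat)}}) \<subseteq> sets SC"
  proof (clarify)
    fix N :: nat
    show "(\<Inter>i\<in>{N..}. {\<omega>. stake (Suc i) \<omega> \<in> {xs. xs ! i \<noteq> 2}}) \<in> sets SC"
      by (rule sets.countable_INT[OF b]) simp
  qed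
  show ?thesis unfolding e
    by (rule sets.Int[OF sets.countable_INT[OF a] sets.countable_UN[OF c]]) simp
qed

lemma AE_win: "AE X in SS. FF X \<in> Parity MM Col0"
proof -
  interpret S: prob_space SS by (rule SS_prob)
  define A where "A k = {X. k \<le> X !! k}" for k
  have Am: "A k \<in> sets SS" for k
    using SS_stake[of "Suc k" "{xs. k \<le> xs ! k}"] by (simp add: A_def del: stake.simps)
  have mA: "measure SS (A k) = (1/2)^k" for k
    using indep[of "\<lambda>_. True" k "{x. k \<le> x}"] S.prob_space D_ge by (simp add: A_def)
  have "AE X in SS. eventually (\<lambda>k. X \<in> space SS - A k) sequentially"
    by (rule borel_cantelli_AE1) (use Am in \<open>auto simp: mA S.emeasure_eq_measure summable_geometric\<close>)
  then show ?thesis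
  proof (rule AE_mp[OF _ AE_I2], intro impI)
    fix X assume "eventually (\<lambda>k. X \<in> space SS - A k) sequentially"
    then obtain K where K: "\<And>k. k \<ge> K \<Longrightarrow> \<not> k \<le> X !! k" by (auto simp: eventually_sequentially A_def)
    have "FF X !! i \<noteq> 2" if "i \<ge> 3*K" for i
    proof -
      have "K \<le> i div 3" using div_le_mono[OF that, of 3] by simp
      then have "\<not> i div 3 \<le> X !! (i div 3)" using K by blast
      then show ?thesis by (simp add: play_def)
    qed
    then have "\<forall>\<^sub>\<infinity>i. FF X !! i \<noteq> 2" unfolding MOST_nat_le by blast
    then show "FF X \<in> Parity MM Col0" using FF_play unfolding Parity_char by simp
  qed
qed

lemma part2: "HD_strategy MM sig \<and> is_play_measure MM 0 sig mu2 \<and> measure mu2 (Parity MM Col0) = 1"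
proof -
  interpret S: prob_space SS by (rule SS_prob)
  have pm: "is_play_measure MM 0 sig mu2"
    unfolding is_play_measure_def mu2_def
  proof (intro conjI allI)
    show "prob_space (distr SS SC FF)" by (rule S.prob_space_distr[OF FF_meas])
    show "sets (distr SS SC FF) = sets SC" by simp
    fix h :: "nat list"
    have "measure (distr SS SC FF) {\<omega>. stake (length h) \<omega> = h} = measure SS (FF -` {\<omega>. stake (length h) \<omega> = h} \<inter> space SS)"
      by (rule measure_distr[OF FF_meas]) (use SC_stake[of "length h" "{h}"] in simp)
    also have "\<dots> = cyl_prob MM 0 sig h" using cyl2[of h] by (simp add: vimage_def)
    finally show "measure (distr SS SC FF) {\<omega>. stake (length h) \<omega> = h} = cyl_prob MM 0 sig h" .
  qed
  have "measure mu2 (Parity MM Col0) = measure SS (FF -` Parity MM Col0 \<inter> space SS)"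
    unfolding mu2_def by (rule measure_distr[OF FF_meas Parity_meas])
  also have "\<dots> = measure SS {X \<in> space SS. FF X \<in> Parity MM Col0}" by (simp add: vimage_def)
  also have "\<dots> = 1"
  proof (subst S.prob_Collect_eq_1)
    show "{X \<in> space SS. FF X \<in> Parity MM Col0} \<in> sets SS"
      using measurable_sets[OF FF_meas Parity_meas] by (simp add: vimage_def)
    show "AE X in SS. FF X \<in> Parity MM Col0" by (rule AE_win)
  qed
  finally show ?thesis using HD pm by simp
qed

theorem theorem6:
  shows "\<exists>M Col s. wf_mdp M \<and> infinitely_branching M \<and> (\<forall>t. Col t \<in> {0, 1}) \<and>
     (\<forall>\<sigma> \<mu>. FR_strategy M \<sigma> \<and> is_play_measure M s \<sigma> \<mu> \<longrightarrow>
        measure \<mu> (Parity M Col) = 0) \<and>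
     (\<exists>\<sigma> \<mu>. HD_strategy M \<sigma> \<and> is_play_measure M s \<sigma> \<mu> \<and>
        measure \<mu> (Parity M Col) = 1)"
proof (intro exI conjI)
  show "wf_mdp MM" by (rule wf)
  show "infinitely_branching MM" by (rule inf_br)
  show "\<forall>t. Col0 t \<in> {0, 1}" by (simp add: Col0_def)
  show "\<forall>\<sigma> \<mu>. FR_strategy MM \<sigma> \<and> is_play_measure MM 0 \<sigma> \<mu> \<longrightarrow> measure \<mu> (Parity MM Col0) = 0"
  proof (intro allI impI)
    fix \<sigma> \<mu> assume a: "FR_strategy MM \<sigma> \<and> is_play_measure MM 0 \<sigma> \<mu>"
    then obtain Mem m0 upd sel where "is_strategy MM \<sigma>" "finite Mem" "wf_transducer MM Mem m0 upd sel"
      "induces MM m0 upd sel \<sigma>" unfolding FR_strategy_def by blast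
    then show "measure \<mu> (Parity MM Col0) = 0" using part1_main a by blast
  qed
  show "HD_strategy MM sig" "is_play_measure MM 0 sig mu2" "measure mu2 (Parity MM Col0) = 1"
    using part2 by auto
qed


end
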